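(* Let $k,l$ be positive integers, let $G$ be a $k$-degenerate graph and $H$ an $l$-degenerate graph. Then $G+_R H$ is $(k+l)$-degenerate.
   Context: A graph is $k$-degenerate if its vertices can be successively deleted so that each deleted vertex has degree at most $k$ at the time of deletion. The triangle parallel graph $R(G)$ has vertex set $V(G)\cup E(G)$: it consists of $G$ together with, for each edge $e=xy$ of $G$, a new vertex $e$ adjacent to $x$ and $y$. The $R$-sum $G+_R H$ has vertex set $(V(G)\cup E(G))\times V(H)$, and $(u_1,u_2)\sim(v_1,v_2)$ iff [$u_1=v_1\in V(G)$ and $u_2v_2\in E(H)$] or [$u_2=v_2$ and $u_1v_1\in E(R(G))$]. *)

theory Defs
  imports Main
begin

type_synonym 'a ugraph = "'a set \<times> 'a set set"

definition verts :: "'a ugraph \<Rightarrow> 'a set" where "verts G = fst G"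
definition edges :: "'a ugraph \<Rightarrow> 'a set set" where "edges G = snd G"

definition simple_graph :: "'a ugraph \<Rightarrow> bool" where
  "simple_graph G \<longleftrightarrow> finite (verts G) \<and>
     (\<forall>e\<in>edges G. \<exists>x y. x \<noteq> y \<and> x \<in> verts G \<and> y \<in> verts G \<and> e = {x, y})"

text \<open>k-degenerate: the vertices can be deleted one after another (in the order of
  the list vs) so that each deleted vertex has degree at most k in the graph that
  remains at the time of deletion, i.e. at most k neighbours among the vertices
  deleted after it.\<close>

definition degenerate :: "nat \<Rightarrow> 'a ugraph \<Rightarrow> bool" where
  "degenerate k G \<longleftrightarrow> (\<exists>vs. distinct vs \<and> set vs = verts G \<and>
     (\<forall>i < length vs. card {j. i < j \<and> j < length vs \<and> {vs ! i, vs ! j} \<in> edges G} \<le> k))"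

text \<open>Triangle parallel graph R(G): vertex set V(G) \<union> E(G) (as a disjoint sum),
  G together with, for each edge e = xy, a new vertex e adjacent to x and y.\<close>

definition tri_parallel :: "'a ugraph \<Rightarrow> ('a + 'a set) ugraph" where
  "tri_parallel G =
     (Inl ` verts G \<union> Inr ` edges G,
      {{Inl x, Inl y} | x y. {x, y} \<in> edges G} \<union>
      {{Inr e, Inl x} | e x. e \<in> edges G \<and> x \<in> e})"

definition R_sum :: "'a ugraph \<Rightarrow> 'b ugraph \<Rightarrow> (('a + 'a set) \<times> 'b) ugraph" where
  "R_sum G H =
     (verts (tri_parallel G) \<times> verts H,
      {{(u1, u2), (v1, v2)} | u1 u2 v1 v2.
         (u1, u2) \<in> verts (tri_parallel G) \<times> verts H \<and>
         (v1, v2) \<in> verts (tri_parallel G) \<times> verts H \<and>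
         ((u1 = v1 \<and> u1 \<in> Inl ` verts G \<and> {u2, v2} \<in> edges H) \<or>
          (u2 = v2 \<and> {u1, v1} \<in> edges (tri_parallel G)))})"

end

theory Submission
  imports Defs
begin

lemma degenerate_imp_rank:
  assumes "degenerate k G"
  shows "\<exists>r::'a\<Rightarrow>nat. inj_on r (verts G) \<and>
     (\<forall>v\<in>verts G. card {u\<in>verts G. r v < r u \<and> {v,u} \<in> edges G} \<le> k)"
proof -
  obtain vs where d: "distinct vs" and s: "set vs = verts G" and
    c: "\<forall>i < length vs. card {j. i < j \<and> j < length vs \<and> {vs ! i, vs ! j} \<in> edges G} \<le> k"
    using assms unfolding degenerate_def by blast
  define r where "r = inv_into {..<length vs} (nth vs)"
  have injn: "inj_on (nth vs) {..<length vs}" using d by (simp add: inj_on_nth)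
  have img: "nth vs ` {..<length vs} = verts G" using s by (auto simp: set_conv_nth)
  have rr: "\<And>v. v \<in> verts G \<Longrightarrow> r v < length vs \<and> vs ! (r v) = v"
  proof -
    fix v assume "v \<in> verts G"
    then have v: "v \<in> nth vs ` {..<length vs}" using img by simp
    show "r v < length vs \<and> vs ! (r v) = v"
      using inv_into_into[OF v] f_inv_into_f[OF v] unfolding r_def by simp
  qed
  have inj: "inj_on r (verts G)"
  proof (rule inj_onI)
    fix u v assume "u \<in> verts G" "v \<in> verts G" "r u = r v"
    then show "u = v" using rr[of u] rr[of v] by metis
  qed
  show ?thesis
  proof (intro exI conjI ballI)
    show "inj_on r (verts G)" by (fact inj)
  next
    fix v assume v: "v \<in> verts G"
    let ?J = "{j. r v < j \<and> j < length vs \<and> {vs ! (r v), vs ! j} \<in> edges G}"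
    have sub: "{u\<in>verts G. r v < r u \<and> {v,u} \<in> edges G} \<subseteq> nth vs ` ?J"
    proof
      fix u assume "u \<in> {u\<in>verts G. r v < r u \<and> {v,u} \<in> edges G}"
      then show "u \<in> nth vs ` ?J" using rr[of u] rr[of v] v
        by (intro image_eqI[of _ _ "r u"]) auto
    qed
    have "card {u\<in>verts G. r v < r u \<and> {v,u} \<in> edges G} \<le> card (nth vs ` ?J)"
      by (rule card_mono[OF _ sub]) auto
    also have "\<dots> \<le> card ?J" by (rule card_image_le) auto
    also have "\<dots> \<le> k" using c rr[OF v] by blast
    finally show "card {u\<in>verts G. r v < r u \<and> {v,u} \<in> edges G} \<le> k" .
  qed
qed

lemma rank_imp_degenerate:
  fixes r :: "'a \<Rightarrow> 'c::linorder"
  assumes fin: "finite (verts G)" and inj: "inj_on r (verts G)"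
    and c: "\<forall>v\<in>verts G. card {u\<in>verts G. r v < r u \<and> {v,u} \<in> edges G} \<le> k"
  shows "degenerate k G"
proof -
  define s where "s = sorted_list_of_set (r ` verts G)"
  have ss: "sorted_wrt (<) s" unfolding s_def by (rule strict_sorted_list_of_set)
  have se: "set s = r ` verts G" unfolding s_def using fin by simp
  define g where "g = inv_into (verts G) r"
  define vs where "vs = map g s"
  have ds: "distinct s" using ss strict_sorted_iff by blast
  have inv1: "\<And>y. y \<in> set s \<Longrightarrow> r (g y) = y \<and> g y \<in> verts G"
  proof -
    fix y assume "y \<in> set s"
    then have y: "y \<in> r ` verts G" using se by simp
    show "r (g y) = y \<and> g y \<in> verts G"
      unfolding g_def using f_inv_into_f[OF y] inv_into_into[OF y] by simp
  qed
  have ig: "inj_on g (set s)"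
  proof (rule inj_onI)
    fix a b assume "a \<in> set s" "b \<in> set s" "g a = g b"
    then show "a = b" using inv1[of a] inv1[of b] by metis
  qed
  have d: "distinct vs" unfolding vs_def using ds ig by (simp add: distinct_map)
  have st: "set vs = verts G"
  proof
    show "set vs \<subseteq> verts G" unfolding vs_def using inv1 by auto
    show "verts G \<subseteq> set vs"
    proof
      fix v assume v: "v \<in> verts G"
      have "g (r v) = v" unfolding g_def using inj v by simp
      moreover have "r v \<in> set s" using se v by simp
      ultimately show "v \<in> set vs" unfolding vs_def by (metis image_eqI set_map)
    qed
  qed
  have len: "length vs = length s" unfolding vs_def by simp
  have rv: "\<And>i. i < length vs \<Longrightarrow> r (vs ! i) = s ! i"
  proof -
    fix i assume "i < length vs"
    then have "i < length s" "s ! i \<in> set s" using len by auto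
    then show "r (vs ! i) = s ! i" unfolding vs_def using inv1 by simp
  qed
  show ?thesis unfolding degenerate_def
  proof (intro exI conjI allI impI)
    fix i assume i: "i < length vs"
    let ?J = "{j. i < j \<and> j < length vs \<and> {vs ! i, vs ! j} \<in> edges G}"
    let ?T = "{u\<in>verts G. r (vs!i) < r u \<and> {vs!i,u} \<in> edges G}"
    have injn: "inj_on (nth vs) ?J" using d by (intro inj_on_nth) auto
    have sub: "nth vs ` ?J \<subseteq> ?T"
    proof
      fix u assume "u \<in> nth vs ` ?J"
      then obtain j where j: "j \<in> ?J" "u = vs ! j" by blast
      have jl: "i < j" "j < length s" using j(1) len by auto
      have "s ! i < s ! j" using sorted_wrt_nth_less[OF ss jl] .
      moreover have "u \<in> verts G" using j st jl len by (metis nth_mem)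
      moreover have "r u = s ! j" using j(2) rv jl len by simp
      moreover have "r (vs ! i) = s ! i" using rv i by simp
      ultimately show "u \<in> ?T" using j by simp
    qed
    have finT: "finite ?T" using fin by simp
    have "card ?J = card (nth vs ` ?J)" using injn by (simp add: card_image)
    also have "\<dots> \<le> card ?T" using card_mono[OF finT sub] .
    also have "\<dots> \<le> k"
    proof -
      have "vs ! i \<in> verts G" using st i nth_mem by blast
      then show ?thesis using c by blast
    qed
    finally show "card ?J \<le> k" .
  next
    show "distinct vs" by (fact d)
  next
    show "set vs = verts G" by (fact st)
  qed
qed

lemma tri_edge_iff:
  "{a, b} \<in> edges (tri_parallel G) \<longleftrightarrow>
     (\<exists>x y. a = Inl x \<and> b = Inl y \<and> {x,y} \<in> edges G) \<or>
     (\<exists>e x. a = Inr e \<and> b = Inl x \<and> e \<in> edges G \<and> x \<in> e) \<or>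
     (\<exists>e x. a = Inl x \<and> b = Inr e \<and> e \<in> edges G \<and> x \<in> e)"
  unfolding tri_parallel_def edges_def
  by (auto simp: doubleton_eq_iff insert_commute)

lemma rsum_edge_iff:
  "{p, q} \<in> edges (R_sum G H) \<longleftrightarrow>
    p \<in> verts (tri_parallel G) \<times> verts H \<and> q \<in> verts (tri_parallel G) \<times> verts H \<and>
    ((fst p = fst q \<and> fst p \<in> Inl ` verts G \<and> {snd p, snd q} \<in> edges H) \<or>
     (snd p = snd q \<and> {fst p, fst q} \<in> edges (tri_parallel G)))"
proof
  assume "{p, q} \<in> edges (R_sum G H)"
  then obtain u1 u2 v1 v2 where eq: "{p,q} = {(u1, u2), (v1, v2)}" and
    c: "(u1, u2) \<in> verts (tri_parallel G) \<times> verts H \<and>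
         (v1, v2) \<in> verts (tri_parallel G) \<times> verts H \<and>
         ((u1 = v1 \<and> u1 \<in> Inl ` verts G \<and> {u2, v2} \<in> edges H) \<or>
          (u2 = v2 \<and> {u1, v1} \<in> edges (tri_parallel G)))"
    unfolding R_sum_def edges_def by auto
  from eq have "(p = (u1,u2) \<and> q = (v1,v2)) \<or> (p = (v1,v2) \<and> q = (u1,u2))"
    by (auto simp: doubleton_eq_iff)
  then show "p \<in> verts (tri_parallel G) \<times> verts H \<and> q \<in> verts (tri_parallel G) \<times> verts H \<and>
    ((fst p = fst q \<and> fst p \<in> Inl ` verts G \<and> {snd p, snd q} \<in> edges H) \<or>
     (snd p = snd q \<and> {fst p, fst q} \<in> edges (tri_parallel G)))"
    using c by (auto simp: insert_commute)
next
  assume a: "p \<in> verts (tri_parallel G) \<times> verts H \<and> q \<in> verts (tri_parallel G) \<times> verts H \<and>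
    ((fst p = fst q \<and> fst p \<in> Inl ` verts G \<and> {snd p, snd q} \<in> edges H) \<or>
     (snd p = snd q \<and> {fst p, fst q} \<in> edges (tri_parallel G)))"
  show "{p, q} \<in> edges (R_sum G H)"
    unfolding R_sum_def edges_def
    apply (simp only: snd_conv mem_Collect_eq)
    apply (rule exI[of _ "fst p"], rule exI[of _ "snd p"], rule exI[of _ "fst q"], rule exI[of _ "snd q"])
    using a by (simp add: edges_def)
qed

lemma lex_less:
  fixes a b a' b' K :: nat
  assumes "b < K" "b' < K" "a * K + b < a' * K + b'"
  shows "a < a' \<or> (a = a' \<and> b < b')"
proof (rule ccontr)
  assume "\<not> ?thesis"
  then have "a' < a \<or> (a = a' \<and> b' \<le> b)" by auto
  then show False
  proof
    assume "a' < a"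
    then have "Suc a' \<le> a" by simp
    then have "Suc a' * K \<le> a * K" by (rule mult_right_mono) simp
    then show False using assms by simp
  qed (use assms in simp)
qed


theorem theorem2:
  fixes k l :: nat and G :: "'a ugraph" and H :: "'b ugraph"
  assumes "0 < k" and "0 < l"
    and "simple_graph G" and "simple_graph H"
    and "degenerate k G" and "degenerate l H"
  shows "degenerate (k + l) (R_sum G H)"
proof -
  obtain rG :: "'a \<Rightarrow> nat" where injG: "inj_on rG (verts G)" and
    cG: "\<forall>v\<in>verts G. card {u\<in>verts G. rG v < rG u \<and> {v,u} \<in> edges G} \<le> k"
    using degenerate_imp_rank[OF assms(5)] by blast
  obtain rH :: "'b \<Rightarrow> nat" where injH: "inj_on rH (verts H)" and
    cH: "\<forall>v\<in>verts H. card {u\<in>verts H. rH v < rH u \<and> {v,u} \<in> edges H} \<le> l"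
    using degenerate_imp_rank[OF assms(6)] by blast
  have finG: "finite (verts G)" and finH: "finite (verts H)"
    using assms(3,4) by (auto simp: simple_graph_def)
  have EG: "\<And>e. e \<in> edges G \<Longrightarrow> \<exists>x y. x \<noteq> y \<and> x \<in> verts G \<and> y \<in> verts G \<and> e = {x, y}"
    using assms(3) by (auto simp: simple_graph_def)
  have "edges G \<subseteq> Pow (verts G)" using EG by blast
  then have finE: "finite (edges G)" using finG by (meson finite_Pow_iff finite_subset)
  define VV where "VV = verts (R_sum G H)"
  have VV: "VV = (Inl ` verts G \<union> Inr ` edges G) \<times> verts H"
    unfolding VV_def R_sum_def tri_parallel_def verts_def by simp
  have finVV: "finite VV" unfolding VV using finG finH finE by simp
  obtain f n where fn: "f ` VV = {i::nat. i < n}" and injf: "inj_on f VV"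
    using finite_imp_inj_to_nat_seg[OF finVV] by blast
  have fless: "\<And>p. p \<in> VV \<Longrightarrow> f p < n" using fn by blast
  define K where "K = Suc (Max (rH ` verts H))"
  have HK: "\<And>w. w \<in> verts H \<Longrightarrow> rH w < K"
    unfolding K_def using finH by (simp add: le_imp_less_Suc)
  define rk where "rk p = (case fst p of Inl x \<Rightarrow> n + (rG x * K + rH (snd p)) | Inr e \<Rightarrow> f p)" for p
  have rkl: "\<And>x w. rk (Inl x, w) = n + (rG x * K + rH w)" by (simp add: rk_def)
  have rkr: "\<And>e w. rk (Inr e, w) = f (Inr e, w)" by (simp add: rk_def)
  have inj: "inj_on rk VV"
  proof (rule inj_onI)
    fix p q assume p: "p \<in> VV" and q: "q \<in> VV" and eq: "rk p = rk q"
    obtain p1 p2 where pp: "p = (p1, p2)" by fastforce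
    obtain q1 q2 where qq: "q = (q1, q2)" by fastforce
    show "p = q"
    proof (cases p1)
      case (Inl x)
      note px = Inl
      show ?thesis
      proof (cases q1)
        case (Inl y)
        have b: "rH p2 < K" "rH q2 < K" using p q HK unfolding pp qq VV by auto
        have e: "rG x * K + rH p2 = rG y * K + rH q2" using eq unfolding pp qq px Inl rkl by simp
        then have "(rG x * K + rH p2) mod K = (rG y * K + rH q2) mod K"
             "(rG x * K + rH p2) div K = (rG y * K + rH q2) div K" by simp_all
        then have "rH p2 = rH q2" "rG x = rG y" using b by simp_all
        then show ?thesis using p q injG injH unfolding pp qq px Inl VV
          by (auto dest: inj_onD)
      next
        case (Inr e)
        have "f q < n" using fless q by blast
        then show ?thesis using eq unfolding pp qq px Inr rkl rkr by simp
      qed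
    next
      case (Inr e)
      note pe = Inr
      have fp: "f p < n" using fless p by blast
      show ?thesis
      proof (cases q1)
        case (Inl y)
        then show ?thesis using eq fp unfolding pp qq pe Inl rkl rkr by simp
      next
        case (Inr e')
        then show ?thesis using eq injf p q unfolding pp qq pe Inr rkl rkr by (auto dest: inj_onD)
      qed
    qed
  qed
  show ?thesis
  proof (rule rank_imp_degenerate[where r = rk])
    show "finite (verts (R_sum G H))" using finVV VV_def by simp
    show "inj_on rk (verts (R_sum G H))" using inj VV_def by simp
    show "\<forall>v\<in>verts (R_sum G H). card {u \<in> verts (R_sum G H). rk v < rk u \<and> {v, u} \<in> edges (R_sum G H)} \<le> k + l"
    proof
      fix v assume v: "v \<in> verts (R_sum G H)"
      let ?S = "{u \<in> verts (R_sum G H). rk v < rk u \<and> {v, u} \<in> edges (R_sum G H)}"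
      have VT: "verts (tri_parallel G) = Inl ` verts G \<union> Inr ` edges G"
        unfolding tri_parallel_def verts_def by simp
      obtain v1 w where vv: "v = (v1, w)" by fastforce
      have w: "w \<in> verts H" using v unfolding vv VV_def[symmetric] VV by auto
      show "card ?S \<le> k + l"
      proof (cases v1)
        case (Inr e)
        have e: "e \<in> edges G" using v unfolding vv Inr VV_def[symmetric] VV by auto
        have sub: "?S \<subseteq> (\<lambda>x. (Inl x :: 'a + 'a set, w)) ` e"
        proof
          fix u assume u: "u \<in> ?S"
          obtain u1 u2 where uu: "u = (u1, u2)" by fastforce
          have "{v, u} \<in> edges (R_sum G H)" using u by blast
          then have "u2 = w \<and> {Inr e, u1} \<in> edges (tri_parallel G)"
            unfolding rsum_edge_iff vv uu Inr by auto
          then show "u \<in> (\<lambda>x. (Inl x :: 'a + 'a set, w)) ` e" unfolding uu tri_edge_iff by auto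
        qed
        have "card ?S \<le> card ((\<lambda>x. (Inl x :: 'a + 'a set, w)) ` e)"
        proof (rule card_mono[OF _ sub])
          show "finite ((\<lambda>x. (Inl x :: 'a + 'a set, w)) ` e)" using EG[OF e] by auto
        qed
        also have "card ((\<lambda>x. (Inl x :: 'a + 'a set, w)) ` e) \<le> card e" by (rule card_image_le) (use EG[OF e] in auto)
        also have "\<dots> \<le> 2" using EG[OF e] by (auto simp: card_insert_if)
        finally show ?thesis using assms(1,2) by simp
      next
        case (Inl x)
        have x: "x \<in> verts G" using v unfolding vv Inl VV_def[symmetric] VV by auto
        let ?SH = "{u\<in>verts H. rH w < rH u \<and> {w,u} \<in> edges H}"
        let ?SG = "{u\<in>verts G. rG x < rG u \<and> {x,u} \<in> edges G}"
        have sub: "?S \<subseteq> (\<lambda>w'. (Inl x :: 'a + 'a set, w')) ` ?SH \<union> (\<lambda>y. (Inl y :: 'a + 'a set, w)) ` ?SG"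
        proof
          fix u assume u: "u \<in> ?S"
          obtain u1 u2 where uu: "u = (u1, u2)" by fastforce
          have uV: "u1 \<in> Inl ` verts G \<union> Inr ` edges G" "u2 \<in> verts H"
            using u unfolding uu VV_def[symmetric] VV by auto
          have lt: "rk v < rk u" using u by blast
          have "{v, u} \<in> edges (R_sum G H)" using u by blast
          then have "(u1 = Inl x \<and> {w, u2} \<in> edges H) \<or> (u2 = w \<and> {Inl x, u1} \<in> edges (tri_parallel G))"
            unfolding rsum_edge_iff vv uu Inl by auto
          then show "u \<in> (\<lambda>w'. (Inl x :: 'a + 'a set, w')) ` ?SH \<union> (\<lambda>y. (Inl y :: 'a + 'a set, w)) ` ?SG"
          proof
            assume a: "u1 = Inl x \<and> {w, u2} \<in> edges H"
            then have "rH w < rH u2" using lt unfolding vv uu Inl by (simp add: rkl)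
            then show ?thesis using a uV unfolding uu by auto
          next
            assume a: "u2 = w \<and> {Inl x, u1} \<in> edges (tri_parallel G)"
            then consider y where "u1 = Inl y" "{x, y} \<in> edges G" | e' where "u1 = Inr e'"
              unfolding tri_edge_iff by auto
            then show ?thesis
            proof cases
              case 1
              have y: "y \<in> verts G" using uV 1 by auto
              have "rG x * K + rH w < rG y * K + rH w" using lt a unfolding vv uu Inl 1 by (simp add: rkl)
              then have "rG x < rG y" using lex_less[OF HK[OF w] HK[OF w]] by simp
              then show ?thesis using 1 a y unfolding uu by auto
            next
              case 2
              have "f u < n" using fless u VV_def by blast
              then show ?thesis using lt unfolding vv uu Inl 2 by (simp add: rkl rkr)
            qed
          qed
        qed
        have "card ?S \<le> card ((\<lambda>w'. (Inl x :: 'a + 'a set, w')) ` ?SH \<union> (\<lambda>y. (Inl y :: 'a + 'a set, w)) ` ?SG)"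
        proof (rule card_mono[OF _ sub])
          show "finite ((\<lambda>w'. (Inl x :: 'a + 'a set, w')) ` ?SH \<union> (\<lambda>y. (Inl y :: 'a + 'a set, w)) ` ?SG)"
            using finG finH by simp
        qed
        also have "\<dots> \<le> card ((\<lambda>w'. (Inl x :: 'a + 'a set, w')) ` ?SH) + card ((\<lambda>y. (Inl y :: 'a + 'a set, w)) ` ?SG)"
          by (rule card_Un_le)
        also have "\<dots> \<le> card ?SH + card ?SG"
          by (intro add_mono card_image_le) (use finG finH in auto)
        also have "\<dots> \<le> l + k" using cH cG w x by (intro add_mono) auto
        finally show ?thesis by simp
      qed
    qed
  qed
qed

end
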